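(* Fix a single slot. Let $\beta\in(0,1]$, let $K\ge 1$, and let $J_{\max}=\min(K,\lfloor 1/\beta\rfloor)$. Let $X_1,\dots,X_K$ be i.i.d. nonnegative random variables with $\mathbb{E}X_1=1$, let $r_1,\dots,r_K\ge 0$ and $T_1,\dots,T_K>0$ be constants, and set $s_k=r_kX_k/T_k$, $\bar s_k=\mathbb{E}s_k=r_k/T_k$. Let $(k_1,\dots,k_K)$ be a permutation of $\{1,\dots,K\}$ with $\bar s_{k_1}\ge \bar s_{k_2}\ge\dots\ge\bar s_{k_K}$ (the probing order). For $j\ge 1$ define the reward $y_j=(1-j\beta)\,w_j$ with $w_j=\max(s_{k_1},\dots,s_{k_j})$, and $w_0=0$, $y_0=0$. For $j$ with $j+1\le K$ define the event $$\mathcal{E}_j=\Big\{\,y_j \ \ge\ \mathbb{E}\big[y_{j+1}\,\big|\,s_{k_1},\dots,s_{k_j}\big]\Big\}=\Big\{(1-j\beta)w_j\ \ge\ (1-(j+1)\beta)\,\phi_{j+1}(w_j)\Big\},$$ where $\phi_{i}(w)=\mathbb{E}[\max(w,s_{k_i})]$ for deterministic $w\ge 0$. Then for every $j\ge 0$ with $j+2\le K$ and $(j+1)\beta\le 1$ (in particular for $0\le j\le J_{\max}-2$ whenever $J_{\max}<K$ or $j+2\le K$), one has $\mathcal{E}_j\subseteq\mathcal{E}_{j+1}$; i.e., the sequential probing-and-scheduling stopping problem with rewards $y_j$ is a monotone stopping problem.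
   Context: This models one time slot of a downlink with $K$ users, where probing the channel of one user consumes a fraction $\beta$ of the slot; after probing $j$ users (in the order $k_1,k_2,\dots$) and stopping, the scheduler transmits to the best probed user and earns $(1-j\beta)$ times its throughput-normalized rate. A stopping problem is called monotone if the events $\mathcal{E}_j$ ("stopping now is at least as good as continuing exactly one more stage and then stopping") are nested increasing, $\mathcal{E}_j\subseteq\mathcal{E}_{j+1}$. *)

theory Defs
  imports "HOL-Probability.Probability"
begin

definition norm_rate :: "(nat \<Rightarrow> 'a \<Rightarrow> real) \<Rightarrow> (nat \<Rightarrow> real) \<Rightarrow> (nat \<Rightarrow> real) \<Rightarrow> nat \<Rightarrow> 'a \<Rightarrow> real" where
  "norm_rate X r T i \<omega> = r i * X i \<omega> / T i"

definition mean_rate :: "(nat \<Rightarrow> real) \<Rightarrow> (nat \<Rightarrow> real) \<Rightarrow> nat \<Rightarrow> real" where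
  "mean_rate r T i = r i / T i"

definition best_probed :: "(nat \<Rightarrow> 'a \<Rightarrow> real) \<Rightarrow> (nat \<Rightarrow> real) \<Rightarrow> (nat \<Rightarrow> real) \<Rightarrow> (nat \<Rightarrow> nat) \<Rightarrow> nat \<Rightarrow> 'a \<Rightarrow> real" where
  "best_probed X r T k j \<omega> = (if j = 0 then 0 else Max ((\<lambda>i. norm_rate X r T (k i) \<omega>) ` {1..j}))"

definition phi :: "'a measure \<Rightarrow> (nat \<Rightarrow> 'a \<Rightarrow> real) \<Rightarrow> (nat \<Rightarrow> real) \<Rightarrow> (nat \<Rightarrow> real) \<Rightarrow> (nat \<Rightarrow> nat) \<Rightarrow> nat \<Rightarrow> real \<Rightarrow> real" where
  "phi M X r T k i w = (\<integral>\<omega>. max w (norm_rate X r T (k i) \<omega>) \<partial>M)"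

definition stop_event :: "'a measure \<Rightarrow> (nat \<Rightarrow> 'a \<Rightarrow> real) \<Rightarrow> (nat \<Rightarrow> real) \<Rightarrow> (nat \<Rightarrow> real) \<Rightarrow> (nat \<Rightarrow> nat) \<Rightarrow> real \<Rightarrow> nat \<Rightarrow> 'a set" where
  "stop_event M X r T k \<beta> j =
     {\<omega> \<in> space M. (1 - real j * \<beta>) * best_probed X r T k j \<omega>
        \<ge> (1 - real (j + 1) * \<beta>) * phi M X r T k (j + 1) (best_probed X r T k j \<omega>)}"

end

theory Submission
  imports Defs
begin

lemma h_nonneg_gap:
  fixes Y :: "'a \<Rightarrow> real"
  assumes P: "prob_space M" and I: "integrable M Y"
  shows "v \<le> (\<integral>\<omega>. max v (a * Y \<omega>) \<partial>M)"
proof -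
  interpret prob_space M by (rule P)
  have "(\<integral>\<omega>. v \<partial>M) \<le> (\<integral>\<omega>. max v (a * Y \<omega>) \<partial>M)"
    by (rule Bochner_Integration.integral_mono) (use I in auto)
  thus ?thesis by (simp add: prob_space)
qed

lemma h_gap_mono:
  fixes Y :: "'a \<Rightarrow> real"
  assumes P: "prob_space M" and I: "integrable M Y"
    and nn: "\<And>\<omega>. \<omega> \<in> space M \<Longrightarrow> 0 \<le> Y \<omega>"
    and aa: "a' \<le> a" and vv: "v \<le> v'"
  shows "(\<integral>\<omega>. max v' (a' * Y \<omega>) \<partial>M) - v' \<le> (\<integral>\<omega>. max v (a * Y \<omega>) \<partial>M) - v"
proof -
  interpret prob_space M by (rule P)
  have "(\<integral>\<omega>. max v' (a' * Y \<omega>) - v' \<partial>M) \<le> (\<integral>\<omega>. max v (a * Y \<omega>) - v \<partial>M)"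
  proof (rule Bochner_Integration.integral_mono)
    show "integrable M (\<lambda>\<omega>. max v' (a' * Y \<omega>) - v')" using I by auto
    show "integrable M (\<lambda>\<omega>. max v (a * Y \<omega>) - v)" using I by auto
    fix \<omega> assume "\<omega> \<in> space M"
    with nn have "a' * Y \<omega> \<le> a * Y \<omega>" using aa by (simp add: mult_right_mono)
    thus "max v' (a' * Y \<omega>) - v' \<le> max v (a * Y \<omega>) - v" using vv by linarith
  qed
  moreover have "(\<integral>\<omega>. max v' (a' * Y \<omega>) - v' \<partial>M) = (\<integral>\<omega>. max v' (a' * Y \<omega>) \<partial>M) - v'"
    using I by (subst Bochner_Integration.integral_diff) (auto simp: prob_space)
  moreover have "(\<integral>\<omega>. max v (a * Y \<omega>) - v \<partial>M) = (\<integral>\<omega>. max v (a * Y \<omega>) \<partial>M) - v"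
    using I by (subst Bochner_Integration.integral_diff) (auto simp: prob_space)
  ultimately show ?thesis by simp
qed

lemma transfer_int:
  fixes Xi X1 :: "'a \<Rightarrow> real"
  assumes Xi: "Xi \<in> borel_measurable M" and X1: "X1 \<in> borel_measurable M"
    and D: "distr M borel Xi = distr M borel X1"
  shows "(\<integral>\<omega>. max v (a * Xi \<omega>) \<partial>M) = (\<integral>\<omega>. max v (a * X1 \<omega>) \<partial>M)"
proof -
  have "(\<integral>\<omega>. max v (a * Xi \<omega>) \<partial>M) = (\<integral>x. max v (a * x) \<partial>distr M borel Xi)"
    using Xi by (simp add: integral_distr)
  also have "\<dots> = (\<integral>x. max v (a * x) \<partial>distr M borel X1)" using D by simp
  also have "\<dots> = (\<integral>\<omega>. max v (a * X1 \<omega>) \<partial>M)"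
    using X1 by (simp add: integral_distr)
  finally show ?thesis .
qed

theorem theorem1:
  fixes M :: "'a measure" and X :: "nat \<Rightarrow> 'a \<Rightarrow> real"
    and r T :: "nat \<Rightarrow> real" and k :: "nat \<Rightarrow> nat"
    and \<beta> :: real and K :: nat
  assumes "prob_space M"
    and "0 < \<beta>" "\<beta> \<le> 1" "1 \<le> K"
    and rv: "\<And>i. i \<in> {1..K} \<Longrightarrow> X i \<in> borel_measurable M"
    and indep: "prob_space.indep_vars M (\<lambda>_. borel) X {1..K}"
    and ident: "\<And>i. i \<in> {1..K} \<Longrightarrow> distr M borel (X i) = distr M borel (X 1)"
    and nonneg: "\<And>i \<omega>. i \<in> {1..K} \<Longrightarrow> \<omega> \<in> space M \<Longrightarrow> 0 \<le> X i \<omega>"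
    and integr: "integrable M (X 1)"
    and mean1: "(\<integral>\<omega>. X 1 \<omega> \<partial>M) = 1"
    and r_nonneg: "\<And>i. i \<in> {1..K} \<Longrightarrow> 0 \<le> r i"
    and T_pos: "\<And>i. i \<in> {1..K} \<Longrightarrow> 0 < T i"
    and perm: "bij_betw k {1..K} {1..K}"
    and sorted: "\<And>i j. 1 \<le> i \<Longrightarrow> i \<le> j \<Longrightarrow> j \<le> K \<Longrightarrow> mean_rate r T (k j) \<le> mean_rate r T (k i)"
  shows "\<forall>j. j + 2 \<le> K \<and> real (j + 1) * \<beta> \<le> 1 \<longrightarrow>
           stop_event M X r T k \<beta> j \<subseteq> stop_event M X r T k \<beta> (j + 1)"
proof (intro allI impI subsetI)
  fix j \<omega>
  assume jj: "j + 2 \<le> K \<and> real (j + 1) * \<beta> \<le> 1" and om: "\<omega> \<in> stop_event M X r T k \<beta> j"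
  have sp: "\<omega> \<in> space M" using om by (simp add: stop_event_def)
  have kin: "\<And>i. i \<in> {1..K} \<Longrightarrow> k i \<in> {1..K}" using perm by (auto simp: bij_betw_def)
  define a where "a i = mean_rate r T (k i)" for i
  have nr: "\<And>i. norm_rate X r T (k i) \<omega>' = a i * X (k i) \<omega>'" for \<omega>'
    by (simp add: a_def norm_rate_def mean_rate_def)
  have phieq: "phi M X r T k i v = (\<integral>\<omega>. max v (a i * X 1 \<omega>) \<partial>M)" if "i \<in> {1..K}" for i v
  proof -
    have "k i \<in> {1..K}" using kin that .
    thus ?thesis unfolding phi_def nr
      using transfer_int[OF rv[of "k i"] rv[of 1] ident[of "k i"]] \<open>1 \<le> K\<close> by auto
  qed
  have a_nn: "0 \<le> a i" if "i \<in> {1..K}" for i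
    using kin[OF that] r_nonneg T_pos by (auto simp: a_def mean_rate_def intro!: divide_nonneg_pos)
  have s_nn: "0 \<le> norm_rate X r T (k i) \<omega>" if "i \<in> {1..K}" for i
    unfolding nr using a_nn[OF that] nonneg[OF kin[OF that] sp] by simp
  define W where "W = best_probed X r T k j \<omega>"
  define W' where "W' = best_probed X r T k (j+1) \<omega>"
  have W0: "0 \<le> W"
  proof (cases "j = 0")
    case False
    hence "1 \<in> {1..j}" by auto
    moreover have "0 \<le> norm_rate X r T (k 1) \<omega>" using s_nn[of 1] jj by auto
    ultimately show ?thesis unfolding W_def best_probed_def using False
      by (smt (verit, ccfv_SIG) Max_ge finite_atLeastAtMost finite_imageI image_eqI)
  qed (simp add: W_def best_probed_def)
  have WW: "W \<le> W'"
  proof (cases "j = 0")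
    case True
    have "0 \<le> norm_rate X r T (k 1) \<omega>" using s_nn[of 1] jj by auto
    thus ?thesis unfolding W_def W'_def best_probed_def using True by simp
  next
    case False
    show ?thesis unfolding W_def W'_def best_probed_def using False
      by (auto intro!: Max_mono)
  qed
  have X1nn: "\<And>\<omega>. \<omega> \<in> space M \<Longrightarrow> 0 \<le> X 1 \<omega>" using nonneg[of 1] \<open>1 \<le> K\<close> by auto
  define g1 where "g1 = (\<integral>\<omega>. max W (a (j+1) * X 1 \<omega>) \<partial>M) - W"
  define g2 where "g2 = (\<integral>\<omega>. max W' (a (j+2) * X 1 \<omega>) \<partial>M) - W'"
  have g2nn: "0 \<le> g2" unfolding g2_def using h_nonneg_gap[OF assms(1) integr] by simp
  have g21: "g2 \<le> g1" unfolding g1_def g2_def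
    by (rule h_gap_mono[OF assms(1) integr X1nn _ WW])
       (use sorted[of "j+1" "j+2"] jj in \<open>auto simp: a_def\<close>)
  have hyp: "(1 - real j * \<beta>) * W \<ge> (1 - real (j + 1) * \<beta>) * (W + g1)"
    using om jj unfolding stop_event_def g1_def W_def
    by (simp add: phieq)
  hence hyp2: "\<beta> * W \<ge> (1 - real (j + 1) * \<beta>) * g1" by (simp add: algebra_simps)
  have c: "0 \<le> 1 - real (j + 1) * \<beta>" using jj by simp
  have "(1 - real (j + 2) * \<beta>) * g2 \<le> (1 - real (j + 1) * \<beta>) * g2"
    using g2nn \<open>0 < \<beta>\<close> by (intro mult_right_mono) auto
  also have "\<dots> \<le> (1 - real (j + 1) * \<beta>) * g1" using c g21 by (rule mult_left_mono[rotated])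
  also have "\<dots> \<le> \<beta> * W'" using hyp2 WW \<open>0 < \<beta>\<close>
    by (smt (verit) mult_left_mono)
  finally have goal: "(1 - real (j + 2) * \<beta>) * g2 \<le> \<beta> * W'" .
  have "(1 - real (j + 1) * \<beta>) * W' \<ge> (1 - real (j + 2) * \<beta>) * (W' + g2)"
    using goal by (simp add: algebra_simps)
  thus "\<omega> \<in> stop_event M X r T k \<beta> (j + 1)"
    using sp jj unfolding stop_event_def g2_def W'_def
    by (simp add: phieq add.commute)
qed

end
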